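(* Let $k\in\mathbb{N}$ and let $G$ be a graph that has a $T_0$-partition of width at most $k$ for some tree $T_0$. Then $G$ has a $T$-partition of width at most $k$ for some tree $T$ with $\Delta(T)\leq \max\{k\Delta(G),2\}$.
   Context: All graphs are finite and simple. $\Delta(G)$ denotes the maximum degree of $G$. For a graph $G$ and a tree $T$, a $T$-partition of $G$ is a family $(V_x : x\in V(T))$ of pairwise disjoint subsets of $V(G)$ (some possibly empty) with union $V(G)$, indexed by the nodes of $T$, such that for every edge $vw$ of $G$, if $v\in V_x$ and $w\in V_y$ then $x=y$ or $xy\in E(T)$. The width of a $T$-partition is $\max\{|V_x| : x\in V(T)\}$. *)

theory Defs
  imports Main
begin

definition graph :: "'a set \<Rightarrow> ('a \<Rightarrow> 'a \<Rightarrow> bool) \<Rightarrow> bool" where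
  "graph V E \<longleftrightarrow> finite V \<and> (\<forall>x y. E x y \<longrightarrow> x \<in> V \<and> y \<in> V)
     \<and> (\<forall>x y. E x y \<longrightarrow> E y x) \<and> (\<forall>x. \<not> E x x)"

definition degree :: "'a set \<Rightarrow> ('a \<Rightarrow> 'a \<Rightarrow> bool) \<Rightarrow> 'a \<Rightarrow> nat" where
  "degree V E v = card {w \<in> V. E v w}"

definition max_degree :: "'a set \<Rightarrow> ('a \<Rightarrow> 'a \<Rightarrow> bool) \<Rightarrow> nat" where
  "max_degree V E = Max (insert 0 (degree V E ` V))"

definition is_cycle :: "('a \<Rightarrow> 'a \<Rightarrow> bool) \<Rightarrow> 'a list \<Rightarrow> bool" where
  "is_cycle E cs \<longleftrightarrow> length cs \<ge> 3 \<and> distinct cs \<and>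
     (\<forall>i < length cs. E (cs ! i) (cs ! ((i + 1) mod length cs)))"

definition connected_graph :: "'a set \<Rightarrow> ('a \<Rightarrow> 'a \<Rightarrow> bool) \<Rightarrow> bool" where
  "connected_graph V E \<longleftrightarrow> (\<forall>x\<in>V. \<forall>y\<in>V. E\<^sup>*\<^sup>* x y)"

definition tree :: "'b set \<Rightarrow> ('b \<Rightarrow> 'b \<Rightarrow> bool) \<Rightarrow> bool" where
  "tree X F \<longleftrightarrow> graph X F \<and> X \<noteq> {} \<and> connected_graph X F \<and> \<not> (\<exists>cs. is_cycle F cs)"

definition T_partition :: "'a set \<Rightarrow> ('a \<Rightarrow> 'a \<Rightarrow> bool) \<Rightarrow> 'b set \<Rightarrow> ('b \<Rightarrow> 'b \<Rightarrow> bool)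
    \<Rightarrow> ('b \<Rightarrow> 'a set) \<Rightarrow> bool" where
  "T_partition V E X F P \<longleftrightarrow>
     (\<forall>x\<in>X. \<forall>y\<in>X. x \<noteq> y \<longrightarrow> P x \<inter> P y = {}) \<and>
     (\<Union>x\<in>X. P x) = V \<and>
     (\<forall>v w x y. E v w \<longrightarrow> x \<in> X \<longrightarrow> y \<in> X \<longrightarrow> v \<in> P x \<longrightarrow> w \<in> P y \<longrightarrow> x = y \<or> F x y)"

definition partition_width :: "'b set \<Rightarrow> ('b \<Rightarrow> 'a set) \<Rightarrow> nat" where
  "partition_width X P = Max (card ` P ` X)"

end

theory Submission imports Defs begin

lemma cycle_mono:
  assumes "is_cycle E cs" "\<And>x y. x \<in> set cs \<Longrightarrow> y \<in> set cs \<Longrightarrow> E x y \<Longrightarrow> E' x y"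
  shows "is_cycle E' cs"
proof -
  have "length cs \<ge> 3" "distinct cs" using assms(1) by (auto simp: is_cycle_def)
  moreover have "\<forall>i<length cs. E' (cs!i) (cs!((i+1) mod length cs))"
  proof (intro allI impI)
    fix i assume i: "i < length cs"
    hence "E (cs!i) (cs!((i+1) mod length cs))" using assms(1) by (auto simp: is_cycle_def)
    moreover have "(i+1) mod length cs < length cs" using i by (metis mod_less_divisor not_less0 gr0I)
    ultimately show "E' (cs!i) (cs!((i+1) mod length cs))" using assms(2) i by (meson nth_mem)
  qed
  ultimately show ?thesis by (simp add: is_cycle_def)
qed

lemma cycle_rotate:
  assumes "is_cycle E cs" shows "is_cycle E (rotate n cs)"
proof -
  let ?L = "length cs"
  have L: "?L \<ge> 3" "distinct cs" and e: "\<forall>i<?L. E (cs!i) (cs!((i+1) mod ?L))"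
    using assms by (auto simp: is_cycle_def)
  have "\<forall>i<?L. E (rotate n cs ! i) (rotate n cs ! ((i+1) mod ?L))"
  proof (intro allI impI)
    fix i assume i: "i < ?L"
    have pos: "?L > 0" using L(1) by linarith
    have a: "rotate n cs ! i = cs ! ((n+i) mod ?L)" using nth_rotate i by blast
    have b: "rotate n cs ! ((i+1) mod ?L) = cs ! ((n + (i+1) mod ?L) mod ?L)"
      using pos by (intro nth_rotate) simp
    have c: "(n + (i+1) mod ?L) mod ?L = ((n+i) mod ?L + 1) mod ?L"
      by (simp add: mod_simps)
    have "(n+i) mod ?L < ?L" using pos by simp
    with e have "E (cs ! ((n+i) mod ?L)) (cs ! (((n+i) mod ?L + 1) mod ?L))" by blast
    then show "E (rotate n cs ! i) (rotate n cs ! ((i+1) mod ?L))" using a b c by simp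
  qed
  then show ?thesis using L by (simp add: is_cycle_def)
qed

lemma cycle_last:
  assumes "is_cycle E cs" "l \<in> set cs" shows "\<exists>ys. is_cycle E (ys @ [l])"
proof -
  obtain j where j: "j < length cs" "cs ! j = l" using assms(2) by (metis in_set_conv_nth)
  let ?rs = "rotate (Suc j) cs"
  have c: "is_cycle E ?rs" using cycle_rotate assms(1) by blast
  have ne: "?rs \<noteq> []" using j by (cases cs) auto
  have "last ?rs = ?rs ! (length cs - 1)" using ne by (simp add: last_conv_nth)
  also have "\<dots> = cs ! ((Suc j + (length cs - 1)) mod length cs)"
    using j by (intro nth_rotate) simp
  also have "(Suc j + (length cs - 1)) = j + length cs" using j by simp
  also have "cs ! ((j + length cs) mod length cs) = l" using j by simp
  finally have "?rs = butlast ?rs @ [l]" using ne by (metis append_butlast_last_id)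
  then show ?thesis using c by metis
qed

lemma cycle_snoc_props:
  assumes "is_cycle E (ys @ [l])"
  shows "length ys \<ge> 2" "distinct ys" "l \<notin> set ys"
    "\<And>i. Suc i < length ys \<Longrightarrow> E (ys!i) (ys!Suc i)"
    "E (ys ! (length ys - 1)) l" "E l (ys!0)"
proof -
  let ?L = "length ys + 1"
  have L: "length ys \<ge> 2" "distinct (ys@[l])" and e: "\<forall>i<?L. E ((ys@[l])!i) ((ys@[l])!((i+1) mod ?L))"
    using assms by (auto simp: is_cycle_def)
  show "length ys \<ge> 2" "distinct ys" "l \<notin> set ys" using L by auto
  show "E (ys!i) (ys!Suc i)" if "Suc i < length ys" for i
  proof -
    have "i < ?L" using that by simp
    then have "E ((ys@[l])!i) ((ys@[l])!((i+1) mod ?L))" using e by blast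
    moreover have "(i+1) mod ?L = Suc i" using that by simp
    moreover have "(ys@[l])!i = ys!i" "(ys@[l])!Suc i = ys!Suc i" using that by (simp_all add: nth_append)
    ultimately show ?thesis by simp
  qed
  show "E (ys ! (length ys - 1)) l"
  proof -
    have "length ys - 1 < ?L" by simp
    then have "E ((ys@[l])!(length ys - 1)) ((ys@[l])!((length ys - 1 + 1) mod ?L))" using e by blast
    moreover have "(length ys - 1 + 1) mod ?L = length ys" using L by simp
    ultimately show ?thesis using L by (simp add: nth_append)
  qed
  show "E l (ys!0)"
  proof -
    have "length ys < ?L" by simp
    then have "E ((ys@[l])!(length ys)) ((ys@[l])!((length ys + 1) mod ?L))" using e by blast
    moreover have "ys \<noteq> []" using L by auto
    ultimately show ?thesis by (simp add: nth_append)
  qed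
qed

lemma cycle_of_path:
  assumes "length ys \<ge> 3" "distinct ys" "\<And>i. Suc i < length ys \<Longrightarrow> E (ys!i) (ys!Suc i)"
    "E (ys ! (length ys - 1)) (ys!0)"
  shows "is_cycle E ys"
proof -
  have "\<forall>i<length ys. E (ys!i) (ys!((i+1) mod length ys))"
  proof (intro allI impI)
    fix i assume i: "i < length ys"
    show "E (ys!i) (ys!((i+1) mod length ys))"
    proof (cases "Suc i < length ys")
      case True then show ?thesis using assms(3) by simp
    next
      case False
      then have "Suc i = length ys" using i by auto
      then have "i = length ys - 1" "(i+1) mod length ys = 0" by auto
      then show ?thesis using assms(4) by simp
    qed
  qed
  then show ?thesis using assms by (simp add: is_cycle_def)
qed

lemma leaf_exists:
  assumes g: "graph X H" and ac: "\<not>(\<exists>cs. is_cycle H cs)" and ne: "X \<noteq> {}"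
  shows "\<exists>l\<in>X. degree X H l \<le> 1"
proof -
  have fin: "finite X" and HX: "\<And>x y. H x y \<Longrightarrow> x \<in> X \<and> y \<in> X"
    and irr: "\<And>x. \<not> H x x" using g by (auto simp: graph_def)
  define PP where "PP = (\<lambda>xs. xs \<noteq> [] \<and> distinct xs \<and> set xs \<subseteq> X \<and>
       (\<forall>i. Suc i < length xs \<longrightarrow> H (xs!i) (xs!Suc i)))"
  obtain a where a: "a \<in> X" using ne by blast
  have Pa: "PP [a]" using a by (simp add: PP_def)
  have bnd: "\<forall>ys. PP ys \<longrightarrow> length ys < Suc (card X)"
  proof (intro allI impI)
    fix ys assume "PP ys"
    then have "distinct ys" "set ys \<subseteq> X" by (auto simp: PP_def)
    then have "length ys \<le> card X" using fin by (metis card_mono distinct_card)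
    then show "length ys < Suc (card X)" by simp
  qed
  obtain xs where xs: "PP xs" and mx: "\<forall>ys. PP ys \<longrightarrow> length ys \<le> length xs"
    using ex_has_greatest_nat[of PP "[a]" length, OF Pa bnd] by blast
  have xne: "xs \<noteq> []" and dx: "distinct xs" and sx: "set xs \<subseteq> X"
    and px: "\<And>i. Suc i < length xs \<Longrightarrow> H (xs!i) (xs!Suc i)" using xs by (auto simp: PP_def)
  define v where "v = last xs"
  have vx: "v = xs ! (length xs - 1)" using xne by (simp add: v_def last_conv_nth)
  have vX: "v \<in> X" using sx xne by (auto simp: v_def)
  have sub: "{w \<in> X. H v w} \<subseteq> {xs ! (length xs - 2)}"
  proof
    fix w assume w: "w \<in> {w \<in> X. H v w}"
    then have Hw: "H v w" and wX: "w \<in> X" by auto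
    have "w \<in> set xs"
    proof (rule ccontr)
      assume nw: "w \<notin> set xs"
      have "PP (xs @ [w])"
        unfolding PP_def
      proof (intro conjI allI impI)
        show "xs @ [w] \<noteq> []" by simp
        show "distinct (xs @ [w])" using dx nw by simp
        show "set (xs @ [w]) \<subseteq> X" using sx wX by simp
        fix i assume i: "Suc i < length (xs @ [w])"
        show "H ((xs @ [w]) ! i) ((xs @ [w]) ! Suc i)"
        proof (cases "Suc i < length xs")
          case True then show ?thesis using px by (simp add: nth_append)
        next
          case False
          then have "i = length xs - 1" "Suc i = length xs" using i xne by auto
          then show ?thesis using Hw vx by (simp add: nth_append)
        qed
      qed
      then have "length (xs @ [w]) \<le> length xs" using mx by blast
      then show False by simp
    qed
    then obtain i where i: "i < length xs" "xs ! i = w" by (metis in_set_conv_nth)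
    have "i \<noteq> length xs - 1" using i vx Hw irr by auto
    moreover have "\<not> i < length xs - 2"
    proof
      assume il: "i < length xs - 2"
      let ?cs = "drop i xs"
      have "is_cycle H ?cs"
      proof (rule cycle_of_path)
        show "3 \<le> length ?cs" using il by simp
        show "distinct ?cs" using dx by simp
        show "H (?cs ! j) (?cs ! Suc j)" if "Suc j < length ?cs" for j
          using px[of "i+j"] that il by simp
        have "?cs ! (length ?cs - 1) = xs ! (length xs - 1)" using il by simp
        moreover have "?cs ! 0 = xs ! i" using il by simp
        ultimately show "H (?cs ! (length ?cs - 1)) (?cs ! 0)" using Hw vx i by simp
      qed
      then show False using ac by blast
    qed
    ultimately have "i = length xs - 2" using i by linarith
    then show "w \<in> {xs ! (length xs - 2)}" using i by simp
  qed
  have "degree X H v \<le> 1" unfolding degree_def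
    using card_mono[OF _ sub] by simp
  then show ?thesis using vX by blast
qed


definition attach :: "('a \<Rightarrow> 'a \<Rightarrow> bool) \<Rightarrow> 'a \<Rightarrow> 'a \<Rightarrow> 'a \<Rightarrow> 'a \<Rightarrow> bool" where
  "attach F u l = (\<lambda>x y. F x y \<or> (x = u \<and> y = l) \<or> (x = l \<and> y = u))"

definition subdiv :: "('a \<Rightarrow> 'a \<Rightarrow> bool) \<Rightarrow> 'a \<Rightarrow> 'a \<Rightarrow> 'a \<Rightarrow> 'a \<Rightarrow> 'a \<Rightarrow> bool" where
  "subdiv F p q l = (\<lambda>x y. (F x y \<and> \<not>(x = p \<and> y = q) \<and> \<not>(x = q \<and> y = p))
      \<or> (x = p \<and> y = l) \<or> (x = l \<and> y = p) \<or> (x = q \<and> y = l) \<or> (x = l \<and> y = q))"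

lemma rtranclp_lift:
  assumes "\<And>a b. r a b \<Longrightarrow> s\<^sup>*\<^sup>* a b" "r\<^sup>*\<^sup>* x y" shows "s\<^sup>*\<^sup>* x y"
  using assms(2) by (induction rule: rtranclp_induct) (auto intro: rtranclp_trans assms(1))

lemma tree_attach:
  assumes t: "tree X F" and u: "u \<in> X" and l: "l \<notin> X"
  shows "tree (insert l X) (attach F u l)"
proof -
  have g: "graph X F" and c: "connected_graph X F" and ac: "\<not>(\<exists>cs. is_cycle F cs)"
    using t by (auto simp: tree_def)
  let ?A = "attach F u l"
  have FX: "\<And>x y. F x y \<Longrightarrow> x \<in> X \<and> y \<in> X" using g by (auto simp: graph_def)
  have gA: "graph (insert l X) ?A" using g u l unfolding graph_def attach_def by blast
  have conn: "connected_graph (insert l X) ?A"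
    unfolding connected_graph_def
  proof (intro ballI)
    have mono: "?A\<^sup>*\<^sup>* x y" if "F\<^sup>*\<^sup>* x y" for x y
      using rtranclp_lift[OF _ that, of ?A] by (auto simp: attach_def)
    have lu: "?A\<^sup>*\<^sup>* l u" "?A\<^sup>*\<^sup>* u l" by (auto simp: attach_def intro: r_into_rtranclp)
    fix x y assume x: "x \<in> insert l X" and y: "y \<in> insert l X"
    have xu: "?A\<^sup>*\<^sup>* x u" using x lu mono c u unfolding connected_graph_def by auto
    have uy: "?A\<^sup>*\<^sup>* u y" using y lu mono c u unfolding connected_graph_def by auto
    show "?A\<^sup>*\<^sup>* x y" using xu uy by (rule rtranclp_trans)
  qed
  have acA: "\<not>(\<exists>cs. is_cycle ?A cs)"
  proof
    assume "\<exists>cs. is_cycle ?A cs" then obtain cs where cs: "is_cycle ?A cs" by blast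
    show False
    proof (cases "l \<in> set cs")
      case False
      have "is_cycle F cs" by (rule cycle_mono[OF cs]) (use False in \<open>auto simp: attach_def\<close>)
      with ac show False by blast
    next
      case True
      then obtain ys where ys: "is_cycle ?A (ys @ [l])" using cycle_last cs by metis
      note p = cycle_snoc_props[OF ys]
      have m1: "ys ! (length ys - 1) \<in> set ys" "ys ! 0 \<in> set ys" using p(1) by (auto intro!: nth_mem)
      have a: "ys ! (length ys - 1) = u" using p(5) m1 p(3) FX l unfolding attach_def by blast
      have b: "ys ! 0 = u" using p(6) m1 p(3) FX l unfolding attach_def by blast
      have "length ys - 1 = 0" using a b p(1,2) nth_eq_iff_index_eq[of ys "length ys - 1" 0] by (cases ys) auto
      then show False using p(1) by simp
    qed
  qed
  show ?thesis using gA conn acA by (simp add: tree_def)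
qed

lemma tree_subdiv:
  assumes t: "tree X F" and pq: "F p q" and l: "l \<notin> X"
  shows "tree (insert l X) (subdiv F p q l)"
proof -
  have g: "graph X F" and c: "connected_graph X F" and ac: "\<not>(\<exists>cs. is_cycle F cs)"
    using t by (auto simp: tree_def)
  let ?S = "subdiv F p q l"
  have FX: "\<And>x y. F x y \<Longrightarrow> x \<in> X \<and> y \<in> X" and sym: "\<And>x y. F x y \<Longrightarrow> F y x"
    and irr: "\<And>x. \<not> F x x" using g by (auto simp: graph_def)
  have pX: "p \<in> X" "q \<in> X" "p \<noteq> q" using FX pq irr by auto
  have gS: "graph (insert l X) ?S" using g pX l unfolding graph_def subdiv_def by blast
  have conn: "connected_graph (insert l X) ?S"
    unfolding connected_graph_def
  proof (intro ballI)
    have step: "?S\<^sup>*\<^sup>* a b" if "F a b" for a b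
    proof (cases "(a = p \<and> b = q) \<or> (a = q \<and> b = p)")
      case True
      have "?S a l" "?S l b" using True by (auto simp: subdiv_def)
      then show ?thesis by (meson r_into_rtranclp rtranclp_trans)
    next
      case False then show ?thesis using that by (auto simp: subdiv_def intro!: r_into_rtranclp)
    qed
    have mono: "?S\<^sup>*\<^sup>* x y" if "F\<^sup>*\<^sup>* x y" for x y
      using rtranclp_lift[OF step that] .
    have lu: "?S\<^sup>*\<^sup>* l p" "?S\<^sup>*\<^sup>* p l" by (auto simp: subdiv_def intro: r_into_rtranclp)
    fix x y assume x: "x \<in> insert l X" and y: "y \<in> insert l X"
    have xu: "?S\<^sup>*\<^sup>* x p" using x lu mono c pX unfolding connected_graph_def by auto
    have uy: "?S\<^sup>*\<^sup>* p y" using y lu mono c pX unfolding connected_graph_def by auto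
    show "?S\<^sup>*\<^sup>* x y" using xu uy by (rule rtranclp_trans)
  qed
  have acS: "\<not>(\<exists>cs. is_cycle ?S cs)"
  proof
    assume "\<exists>cs. is_cycle ?S cs" then obtain cs where cs: "is_cycle ?S cs" by blast
    show False
    proof (cases "l \<in> set cs")
      case False
      have "is_cycle F cs" by (rule cycle_mono[OF cs]) (use False in \<open>auto simp: subdiv_def\<close>)
      with ac show False by blast
    next
      case True
      then obtain ys where ys: "is_cycle ?S (ys @ [l])" using cycle_last cs by metis
      note p = cycle_snoc_props[OF ys]
      have m1: "ys ! (length ys - 1) \<in> set ys" "ys ! 0 \<in> set ys" using p(1) by (auto intro!: nth_mem)
      have a: "ys ! (length ys - 1) \<in> {p, q}" using p(5) m1 p(3) FX l unfolding subdiv_def by blast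
      have b: "ys ! 0 \<in> {p, q}" using p(6) m1 p(3) FX l unfolding subdiv_def by blast
      have ab: "ys ! (length ys - 1) \<noteq> ys ! 0"
        using p(1,2) nth_eq_iff_index_eq[of ys "length ys - 1" 0] by (cases ys) auto
      have Fab: "F (ys ! (length ys - 1)) (ys ! 0)" using a b ab pq sym by auto
      show False
      proof (cases "length ys = 2")
        case True
        have "?S (ys!0) (ys!Suc 0)" using p(4)[of 0] True by simp
        moreover have "ys ! Suc 0 = ys ! (length ys - 1)" using True by simp
        ultimately show False using a b ab l pX unfolding subdiv_def by auto
      next
        case False
        have "is_cycle F ys"
        proof (rule cycle_of_path)
          show "3 \<le> length ys" using False p(1) by simp
          show "distinct ys" using p(2) .
          show "F (ys ! i) (ys ! Suc i)" if "Suc i < length ys" for i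
          proof -
            have "ys ! i \<in> set ys" "ys ! Suc i \<in> set ys" using that by auto
            then show ?thesis using p(4)[OF that] p(3) unfolding subdiv_def by auto
          qed
          show "F (ys ! (length ys - 1)) (ys ! 0)" using Fab .
        qed
        with ac show False by blast
      qed
    qed
  qed
  show ?thesis using gS conn acS by (simp add: tree_def)
qed

lemma deg_attach:
  assumes g: "graph X F" and u: "u \<in> X" and l: "l \<notin> X"
  shows "degree (insert l X) (attach F u l) l = 1"
    "degree (insert l X) (attach F u l) u = Suc (degree X F u)"
    "x \<in> X \<Longrightarrow> x \<noteq> u \<Longrightarrow> degree (insert l X) (attach F u l) x = degree X F x"
proof -
  have fin: "finite X" and FX: "\<And>x y. F x y \<Longrightarrow> x \<in> X \<and> y \<in> X" using g by (auto simp: graph_def)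
  have "{w \<in> insert l X. attach F u l l w} = {u}" using FX l u by (auto simp: attach_def)
  then show "degree (insert l X) (attach F u l) l = 1" by (simp add: degree_def)
  have "{w \<in> insert l X. attach F u l u w} = insert l {w \<in> X. F u w}" using FX l u by (auto simp: attach_def)
  moreover have "l \<notin> {w \<in> X. F u w}" using l by simp
  ultimately show "degree (insert l X) (attach F u l) u = Suc (degree X F u)"
    using fin by (simp add: degree_def)
  assume x: "x \<in> X" "x \<noteq> u"
  have "{w \<in> insert l X. attach F u l x w} = {w \<in> X. F x w}" using FX l u x by (auto simp: attach_def)
  then show "degree (insert l X) (attach F u l) x = degree X F x" by (simp add: degree_def)
qed

lemma deg_subdiv:
  assumes g: "graph X F" and pq: "F p q" and l: "l \<notin> X"
  shows "degree (insert l X) (subdiv F p q l) l = 2"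
    "x \<in> X \<Longrightarrow> degree (insert l X) (subdiv F p q l) x = degree X F x"
proof -
  have fin: "finite X" and FX: "\<And>x y. F x y \<Longrightarrow> x \<in> X \<and> y \<in> X" and sym: "\<And>x y. F x y \<Longrightarrow> F y x"
    and irr: "\<And>x. \<not> F x x" using g by (auto simp: graph_def)
  have pX: "p \<in> X" "q \<in> X" "p \<noteq> q" using FX pq irr by auto
  have "{w \<in> insert l X. subdiv F p q l l w} = {p, q}" using FX l pX by (auto simp: subdiv_def)
  then show "degree (insert l X) (subdiv F p q l) l = 2" using pX by (simp add: degree_def)
  assume x: "x \<in> X"
  show "degree (insert l X) (subdiv F p q l) x = degree X F x"
  proof (cases "x = p \<or> x = q")
    case True
    then obtain y where y: "F x y" "(x = p \<and> y = q) \<or> (x = q \<and> y = p)" using pq sym by blast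
    have "{w \<in> insert l X. subdiv F p q l x w} = insert l ({w \<in> X. F x w} - {y})"
      using FX l pX y by (auto simp: subdiv_def)
    moreover have "l \<notin> {w \<in> X. F x w} - {y}" using l by simp
    moreover have "y \<in> {w \<in> X. F x w}" using y FX by auto
    moreover have "finite {w \<in> X. F x w}" using fin by simp
    ultimately show ?thesis unfolding degree_def
      by (metis (no_types, lifting) card_Diff1_less card_Diff_singleton card_insert_disjoint
          finite_Diff Suc_pred' zero_less_Suc less_nat_zero_code not_gr_zero)
  next
    case False
    have "{w \<in> insert l X. subdiv F p q l x w} = {w \<in> X. F x w}"
      using FX l pX False x by (auto simp: subdiv_def)
    then show ?thesis by (simp add: degree_def)
  qed
qed


lemma main_gen:
  "card X = Suc n \<Longrightarrow> graph X H \<Longrightarrow> \<not>(\<exists>cs. is_cycle H cs) \<Longrightarrow>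
   \<exists>F e. tree X F \<and> (\<forall>x y. H x y \<longrightarrow> F x y) \<and> (\<forall>x\<in>X. degree X F x \<le> max (degree X H x) 2)
     \<and> e \<in> X \<and> degree X F e \<le> 1"
proof (induction n arbitrary: X H)
  case 0
  then obtain a where X: "X = {a}" by (auto simp: card_Suc_eq)
  define F where "F = (\<lambda>(x::'a) (y::'a). False)"
  have "tree X F" unfolding tree_def graph_def connected_graph_def is_cycle_def F_def X
    by (auto intro: exI[of _ 0])
  moreover have "\<forall>x y. H x y \<longrightarrow> F x y" using 0(2) X unfolding graph_def by blast
  moreover have "degree X F x = 0" for x by (simp add: degree_def F_def)
  ultimately show ?case using X by auto
next
  case (Suc n)
  have fin: "finite X" using Suc.prems(1) by (metis card.infinite nat.simps(3))
  have g: "graph X H" by fact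
  have HX: "\<And>x y. H x y \<Longrightarrow> x \<in> X \<and> y \<in> X" and sym: "\<And>x y. H x y \<Longrightarrow> H y x"
    and irr: "\<And>x. \<not> H x x" using g by (auto simp: graph_def)
  have ne: "X \<noteq> {}" using Suc.prems(1) by auto
  obtain l where l: "l \<in> X" "degree X H l \<le> 1" using leaf_exists[OF g Suc.prems(3) ne] by blast
  define X' where "X' = X - {l}"
  define H' where "H' = (\<lambda>a b. H a b \<and> a \<noteq> l \<and> b \<noteq> l)"
  have XX: "X = insert l X'" "l \<notin> X'" using l by (auto simp: X'_def)
  have cX': "card X' = Suc n" using Suc.prems(1) l fin by (simp add: X'_def)
  have gH': "graph X' H'" using g unfolding graph_def H'_def X'_def by auto
  have acH': "\<not>(\<exists>cs. is_cycle H' cs)"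
  proof
    assume "\<exists>cs. is_cycle H' cs" then obtain cs where "is_cycle H' cs" by blast
    then have "is_cycle H cs" by (rule cycle_mono) (auto simp: H'_def)
    with Suc.prems(3) show False by blast
  qed
  obtain F' e where F': "tree X' F'" "\<forall>x y. H' x y \<longrightarrow> F' x y"
    "\<forall>x\<in>X'. degree X' F' x \<le> max (degree X' H' x) 2" "e \<in> X'" "degree X' F' e \<le> 1"
    using Suc.IH[OF cX' gH' acH'] by blast
  have gF': "graph X' F'" using F'(1) by (simp add: tree_def)
  have FX': "\<And>x y. F' x y \<Longrightarrow> x \<in> X' \<and> y \<in> X'" using gF' by (auto simp: graph_def)
  have finX': "finite X'" using fin by (simp add: X'_def)
  have dmono: "degree X' H' x \<le> degree X H x" for x
    unfolding degree_def by (rule card_mono) (use fin in \<open>auto simp: X'_def H'_def\<close>)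
  have dsuc: "degree X H x = Suc (degree X' H' x)" if "H x l" for x
  proof -
    have "{w \<in> X. H x w} = insert l {w \<in> X'. H' x w}"
      using that HX irr by (auto simp: X'_def H'_def)
    moreover have "l \<notin> {w \<in> X'. H' x w}" using XX by simp
    ultimately show ?thesis using finX' by (simp add: degree_def)
  qed
  have keep: "degree X' F' x \<le> max (degree X H x) 2" if "x \<in> X'" for x
    using F'(3) that dmono[of x] by fastforce
  show ?case
  proof (cases "\<exists>p. H l p")
    case True
    then obtain p where p: "H l p" by blast
    have pX': "p \<in> X'" using p HX irr by (auto simp: X'_def) 
    have uniq: "\<And>y. H l y \<Longrightarrow> y = p"
    proof -
      fix y assume y: "H l y"
      have "card {w \<in> X. H l w} \<le> Suc 0" using l(2) by (simp add: degree_def)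
      then show "y = p" using card_le_Suc0_iff_eq[of "{w \<in> X. H l w}"] fin y p HX by auto
    qed
    have Hp: "H p l" using sym p .
    show ?thesis
    proof (cases "degree X' F' p < max (degree X H p) 2")
      case True
      define F where "F = attach F' p l"
      have t: "tree X F" unfolding F_def XX(1) by (rule tree_attach[OF F'(1) pX' XX(2)])
      have sub: "\<forall>x y. H x y \<longrightarrow> F x y"
      proof (intro allI impI)
        fix x y assume h: "H x y"
        show "F x y"
        proof (cases "x = l \<or> y = l")
          case True
          then have "(x = l \<and> y = p) \<or> (x = p \<and> y = l)" using h uniq sym[OF h] by blast
          then show ?thesis by (auto simp: F_def attach_def)
        next
          case False then show ?thesis using h F'(2) by (auto simp: F_def attach_def H'_def)
        qed
      qed
      note da = deg_attach[OF gF' pX' XX(2)]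
      have deg: "\<forall>x\<in>X. degree X F x \<le> max (degree X H x) 2"
      proof
        fix x assume x: "x \<in> X"
        show "degree X F x \<le> max (degree X H x) 2"
        proof (cases "x = l")
          case True then show ?thesis using da(1) XX(1) by (simp add: F_def)
        next
          case False
          then have xX': "x \<in> X'" using x XX by auto
          show ?thesis
          proof (cases "x = p")
            case True then show ?thesis using da(2) XX(1) \<open>degree X' F' p < max (degree X H p) 2\<close>
              by (simp add: F_def)
          next
            case False then show ?thesis using da(3)[OF xX' False] XX(1) keep[OF xX'] by (simp add: F_def)
          qed
        qed
      qed
      show ?thesis using t sub deg da(1) XX(1) by (intro exI[of _ F] exI[of _ l]) (simp add: F_def)
    next
      case False
      then have "degree X' H' p < degree X' F' p" using dsuc[OF Hp] by simp
      then obtain q where q: "q \<in> X'" "F' p q" "\<not> H' p q"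
      proof -
        assume r: "\<And>q. q \<in> X' \<Longrightarrow> F' p q \<Longrightarrow> \<not> H' p q \<Longrightarrow> thesis"
        show thesis
        proof (rule ccontr)
          assume "\<not> thesis"
          then have "{w \<in> X'. F' p w} \<subseteq> {w \<in> X'. H' p w}" using r by blast
          then have "degree X' F' p \<le> degree X' H' p" unfolding degree_def
            by (rule card_mono[rotated]) (use finX' in simp)
          with \<open>degree X' H' p < degree X' F' p\<close> show False by simp
        qed
      qed
      have nHpq: "\<not> H p q" using q(3) pX' q(1) XX by (auto simp: H'_def)
      define F where "F = subdiv F' p q l"
      have t: "tree X F" unfolding F_def XX(1) by (rule tree_subdiv[OF F'(1) q(2) XX(2)])
      have sub: "\<forall>x y. H x y \<longrightarrow> F x y"
      proof (intro allI impI)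
        fix x y assume h: "H x y"
        show "F x y"
        proof (cases "x = l \<or> y = l")
          case True
          then have "(x = l \<and> y = p) \<or> (x = p \<and> y = l)" using h uniq sym[OF h] by blast
          then show ?thesis by (auto simp: F_def subdiv_def)
        next
          case False
          then have "F' x y" using h F'(2) by (auto simp: H'_def)
          moreover have "\<not>(x = p \<and> y = q)" "\<not>(x = q \<and> y = p)" using h nHpq sym by blast+
          ultimately show ?thesis by (simp add: F_def subdiv_def)
        qed
      qed
      note ds = deg_subdiv[OF gF' q(2) XX(2)]
      have deg: "\<forall>x\<in>X. degree X F x \<le> max (degree X H x) 2"
      proof
        fix x assume x: "x \<in> X"
        show "degree X F x \<le> max (degree X H x) 2"
        proof (cases "x = l")
          case True then show ?thesis using ds(1) XX(1) by (simp add: F_def)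
        next
          case False
          then have xX': "x \<in> X'" using x XX by auto
          then show ?thesis using ds(2)[OF xX'] XX(1) keep[OF xX'] by (simp add: F_def)
        qed
      qed
      have "degree X F e \<le> 1" using ds(2)[OF F'(4)] F'(5) XX(1) by (simp add: F_def)
      then show ?thesis using t sub deg F'(4) XX(1) by (intro exI[of _ F] exI[of _ e]) simp
    qed
  next
    case False
    define F where "F = attach F' e l"
    have t: "tree X F" unfolding F_def XX(1) by (rule tree_attach[OF F'(1) F'(4) XX(2)])
    have sub: "\<forall>x y. H x y \<longrightarrow> F x y"
    proof (intro allI impI)
      fix x y assume h: "H x y"
      have "x \<noteq> l" "y \<noteq> l" using h False sym by blast+
      then show "F x y" using h F'(2) by (auto simp: F_def attach_def H'_def)
    qed
    note da = deg_attach[OF gF' F'(4) XX(2)]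
    have deg: "\<forall>x\<in>X. degree X F x \<le> max (degree X H x) 2"
    proof
      fix x assume x: "x \<in> X"
      show "degree X F x \<le> max (degree X H x) 2"
      proof (cases "x = l")
        case True then show ?thesis using da(1) XX(1) by (simp add: F_def)
      next
        case False
        then have xX': "x \<in> X'" using x XX by auto
        show ?thesis
        proof (cases "x = e")
          case True then show ?thesis using da(2) XX(1) F'(5) by (simp add: F_def)
        next
          case False then show ?thesis using da(3)[OF xX' False] XX(1) keep[OF xX'] by (simp add: F_def)
        qed
      qed
    qed
    show ?thesis using t sub deg da(1) XX(1) by (intro exI[of _ F] exI[of _ l]) (simp add: F_def)
  qed
qed


lemma count_deg:
  assumes gV: "graph V E" and finX: "finite X" and i: "i \<in> X"
   and disj: "\<forall>x\<in>X. \<forall>y\<in>X. x \<noteq> y \<longrightarrow> P x \<inter> P y = {}"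
   and sub: "\<forall>x\<in>X. P x \<subseteq> V"
   and Hdef: "\<And>j. H i j \<Longrightarrow> j \<in> X \<and> (\<exists>v\<in>P i. \<exists>w\<in>P j. E v w)"
   and ci: "card (P i) \<le> k"
  shows "degree X H i \<le> k * max_degree V E"
proof -
  have finV: "finite V" and EV: "\<And>x y. E x y \<Longrightarrow> x \<in> V \<and> y \<in> V" using gV by (auto simp: graph_def)
  let ?N = "{j\<in>X. H i j}"
  let ?S = "SIGMA v:P i. {w\<in>V. E v w}"
  define \<phi> where "\<phi> j = (SOME vw. fst vw \<in> P i \<and> snd vw \<in> P j \<and> E (fst vw) (snd vw))" for j
  have \<phi>: "fst (\<phi> j) \<in> P i \<and> snd (\<phi> j) \<in> P j \<and> E (fst (\<phi> j)) (snd (\<phi> j))" if jN: "j \<in> ?N" for j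
  proof -
    obtain v w where "v\<in>P i" "w\<in>P j" "E v w" using Hdef jN by blast
    then have "\<exists>vw. fst vw \<in> P i \<and> snd vw \<in> P j \<and> E (fst vw) (snd vw)"
      by (intro exI[of _ "(v,w)"]) simp
    then show ?thesis unfolding \<phi>_def by (rule someI_ex)
  qed
  have inj: "inj_on \<phi> ?N"
  proof (rule inj_onI)
    fix a b assume a: "a \<in> ?N" and b: "b \<in> ?N" and e: "\<phi> a = \<phi> b"
    have "snd (\<phi> a) \<in> P a \<inter> P b" using \<phi>[OF a] \<phi>[OF b] e by simp
    then show "a = b" using disj a b by blast
  qed
  have img: "\<phi> ` ?N \<subseteq> ?S"
  proof
    fix z assume "z \<in> \<phi> ` ?N"
    then obtain j where j: "j \<in> ?N" "z = \<phi> j" by blast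
    have "z = (fst z, snd z)" by simp
    moreover have "fst z \<in> P i" "snd z \<in> {w\<in>V. E (fst z) w}" using \<phi>[OF j(1)] j(2) EV by auto
    ultimately show "z \<in> ?S" by (metis SigmaI)
  qed
  have finP: "finite (P i)" using sub i finV by (meson finite_subset)
  have finS: "finite ?S" using finP finV by auto
  have "degree X H i = card ?N" by (simp add: degree_def)
  also have "\<dots> = card (\<phi> ` ?N)" using inj by (simp add: card_image)
  also have "\<dots> \<le> card ?S" using img finS by (rule card_mono[rotated])
  also have "\<dots> = (\<Sum>v\<in>P i. degree V E v)" using finP finV by (simp add: degree_def)
  also have "\<dots> \<le> (\<Sum>v\<in>P i. max_degree V E)"
  proof (rule sum_mono)
    fix v assume "v \<in> P i"
    then have "v \<in> V" using sub i by blast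
    then show "degree V E v \<le> max_degree V E" unfolding max_degree_def
      using finV by (intro Max_ge) auto
  qed
  also have "\<dots> = card (P i) * max_degree V E" by simp
  also have "\<dots> \<le> k * max_degree V E" using ci by simp
  finally show ?thesis .
qed

theorem mainTheorem7:
  fixes V :: "'a set" and E :: "'a \<Rightarrow> 'a \<Rightarrow> bool" and k :: nat
    and X0 :: "'b set" and F0 :: "'b \<Rightarrow> 'b \<Rightarrow> bool" and P0 :: "'b \<Rightarrow> 'a set"
  assumes "graph V E"
    and "tree X0 F0"
    and "T_partition V E X0 F0 P0"
    and "partition_width X0 P0 \<le> k"
  shows "\<exists>(X :: nat set) F P. tree X F \<and> T_partition V E X F P \<and> partition_width X P \<le> k
           \<and> max_degree X F \<le> max (k * max_degree V E) 2"
proof -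
  have gV: "graph V E" by fact
  have EV: "\<And>x y. E x y \<Longrightarrow> x \<in> V \<and> y \<in> V" and Esym: "\<And>x y. E x y \<Longrightarrow> E y x"
    using gV by (auto simp: graph_def)
  have g0: "graph X0 F0" and ne0: "X0 \<noteq> {}" and ac0: "\<not>(\<exists>cs. is_cycle F0 cs)"
    using assms(2) by (auto simp: tree_def)
  have finX0: "finite X0" and F0X: "\<And>x y. F0 x y \<Longrightarrow> x \<in> X0 \<and> y \<in> X0"
    and F0sym: "\<And>x y. F0 x y \<Longrightarrow> F0 y x" and F0irr: "\<And>x. \<not> F0 x x"
    using g0 by (auto simp: graph_def)
  have disj0: "\<forall>x\<in>X0. \<forall>y\<in>X0. x \<noteq> y \<longrightarrow> P0 x \<inter> P0 y = {}"
    and un0: "(\<Union>x\<in>X0. P0 x) = V"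
    and ed0: "\<And>v w x y. E v w \<Longrightarrow> x \<in> X0 \<Longrightarrow> y \<in> X0 \<Longrightarrow> v \<in> P0 x \<Longrightarrow> w \<in> P0 y \<Longrightarrow> x = y \<or> F0 x y"
    using assms(3) unfolding T_partition_def by blast+
  obtain f :: "'b \<Rightarrow> nat" and m where f: "f ` X0 = {i. i < m}" "inj_on f X0"
    using finite_imp_inj_to_nat_seg[OF finX0] by blast
  define X where "X = f ` X0"
  define g where "g = inv_into X0 f"
  have gf: "\<And>x. x \<in> X0 \<Longrightarrow> g (f x) = x" using f(2) by (simp add: g_def inv_into_f_f)
  have gX: "\<And>i. i \<in> X \<Longrightarrow> g i \<in> X0" by (auto simp: X_def g_def inv_into_into)
  have ginj: "inj_on g X" unfolding g_def X_def by (rule inj_on_inv_into) simp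
  have gimg: "g ` X = X0" unfolding X_def image_image using gf by simp
  have finX: "finite X" using finX0 by (simp add: X_def)
  have neX: "X \<noteq> {}" using ne0 by (simp add: X_def)
  define P where "P = (\<lambda>i. P0 (g i))"
  have PX: "P ` X = P0 ` X0" unfolding P_def using gimg by (metis image_image)
  define H where "H = (\<lambda>i j. i \<in> X \<and> j \<in> X \<and> F0 (g i) (g j) \<and> (\<exists>v\<in>P i. \<exists>w\<in>P j. E v w))"
  have gH: "graph X H" unfolding graph_def
  proof (intro conjI allI impI)
    show "finite X" by fact
    fix x y assume h: "H x y"
    then show "x \<in> X" "y \<in> X" by (auto simp: H_def)
    show "H y x" using h F0sym Esym unfolding H_def by blast
  next
    fix x show "\<not> H x x" using F0irr by (simp add: H_def)
  qed
  have acH: "\<not>(\<exists>cs. is_cycle H cs)"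
  proof
    assume "\<exists>cs. is_cycle H cs" then obtain cs where cs: "is_cycle H cs" by blast
    have L: "length cs \<ge> 3" "distinct cs" and e: "\<forall>i<length cs. H (cs!i) (cs!((i+1) mod length cs))"
      using cs by (auto simp: is_cycle_def)
    have sX: "set cs \<subseteq> X"
    proof
      fix x assume "x \<in> set cs"
      then obtain i where "i < length cs" "cs ! i = x" by (metis in_set_conv_nth)
      then show "x \<in> X" using e by (auto simp: H_def)
    qed
    have "is_cycle F0 (map g cs)"
      unfolding is_cycle_def
    proof (intro conjI allI impI)
      show "3 \<le> length (map g cs)" using L by simp
      show "distinct (map g cs)" using L(2) inj_on_subset[OF ginj sX] by (simp add: distinct_map)
      fix i assume i: "i < length (map g cs)"
      have "(i+1) mod length cs < length cs" using i by (metis length_map mod_less_divisor not_less0 gr0I)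
      then show "F0 (map g cs ! i) (map g cs ! ((i + 1) mod length (map g cs)))"
        using e i by (simp add: H_def)
    qed
    with ac0 show False by blast
  qed
  obtain n where cn: "card X = Suc n" using finX neX by (metis card_0_eq not0_implies_Suc)
  obtain F e where F: "tree X F" "\<forall>x y. H x y \<longrightarrow> F x y" "\<forall>x\<in>X. degree X F x \<le> max (degree X H x) 2"
    using main_gen[OF cn gH acH] by blast
  have disj: "\<forall>x\<in>X. \<forall>y\<in>X. x \<noteq> y \<longrightarrow> P x \<inter> P y = {}"
  proof (intro ballI impI)
    fix x y assume "x \<in> X" "y \<in> X" "x \<noteq> y"
    then have "g x \<noteq> g y" "g x \<in> X0" "g y \<in> X0" using ginj gX by (auto dest: inj_onD)
    then show "P x \<inter> P y = {}" using disj0 by (simp add: P_def)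
  qed
  have un: "(\<Union>x\<in>X. P x) = V" using PX un0 by metis
  have TP: "T_partition V E X F P" unfolding T_partition_def
  proof (intro conjI allI impI)
    show "\<forall>x\<in>X. \<forall>y\<in>X. x \<noteq> y \<longrightarrow> P x \<inter> P y = {}" by fact
    show "(\<Union>x\<in>X. P x) = V" by fact
    fix v w x y assume a: "E v w" "x \<in> X" "y \<in> X" "v \<in> P x" "w \<in> P y"
    have "g x = g y \<or> F0 (g x) (g y)" using ed0[OF a(1) gX[OF a(2)] gX[OF a(3)]] a(4,5) by (simp add: P_def)
    then show "x = y \<or> F x y"
    proof
      assume "g x = g y" then show ?thesis using ginj a(2,3) by (auto dest: inj_onD)
    next
      assume "F0 (g x) (g y)" then have "H x y" using a unfolding H_def by blast
      then show ?thesis using F(2) by blast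
    qed
  qed
  have pw: "partition_width X P \<le> k" using assms(4) PX by (simp add: partition_width_def)
  have ci: "card (P i) \<le> k" if "i \<in> X" for i
  proof -
    have "card (P i) \<le> partition_width X P" unfolding partition_width_def
      using finX that by (intro Max_ge) auto
    then show ?thesis using pw by simp
  qed
  have sub: "\<forall>x\<in>X. P x \<subseteq> V" using un by blast
  have bnd: "degree X F i \<le> max (k * max_degree V E) 2" if i: "i \<in> X" for i
  proof -
    have "degree X H i \<le> k * max_degree V E"
      by (rule count_deg[OF gV finX i disj sub _ ci[OF i]]) (auto simp: H_def)
    then show ?thesis using F(3) i by fastforce
  qed
  have md: "max_degree X F \<le> max (k * max_degree V E) 2" unfolding max_degree_def[of X F]
    using finX bnd by (subst Max_le_iff) auto
  show ?thesis using F(1) TP pw md by blast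
qed

end
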